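(* Let $d\ge 2$, let $B^d$ be the closed unit ball in $\mathbb{E}^d$ centred at the origin with boundary sphere $\mathbb{S}^{d-1}$, and let $K_c=\operatorname{conv}\big(\mathbb{S}^{d-1}\cup\{\boldsymbol v_i\mid i\in I\}\big)$ be a cap body, i.e. $\{\boldsymbol v_i\mid i\in I\}$ is a countable set of points of $\mathbb{E}^d\setminus B^d$ such that for any two distinct $i,j\in I$ the segment $\overline{\boldsymbol v_i\boldsymbol v_j}$ intersects $B^d$. Let $\boldsymbol u_1,\dots,\boldsymbol u_k\in\mathbb{S}^{d-1}$. Then $K_c$ is completely illuminated by the directions $\boldsymbol u_1,\dots,\boldsymbol u_k$ if and only if both of the following hold: (i) for every $i\in I$ the closed spherical cap $C_i=\{\boldsymbol x\in\mathbb{S}^{d-1}\mid \langle \boldsymbol x,\boldsymbol v_i\rangle\ge 1\}$ is contained in the open hemisphere $\operatorname{Hem}_{-\boldsymbol u_j}$ for some $j\in\{1,\dots,k\}$; and (ii) $\bigcup_{j=1}^k \operatorname{Hem}_{-\boldsymbol u_j}=\mathbb{S}^{d-1}$.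
   Context: For a unit vector $\boldsymbol u$, $\operatorname{Hem}_{\boldsymbol u}=\{\boldsymbol x\in\mathbb{S}^{d-1}\mid\langle\boldsymbol x,\boldsymbol u\rangle>0\}$ is the open hemisphere centred at $\boldsymbol u$. For a convex body $K$ (compact convex set with nonempty interior), a direction $\boldsymbol u\in\mathbb{S}^{d-1}$ illuminates a boundary point $\boldsymbol p$ of $K$ if there is $\lambda>0$ with $\boldsymbol p+\lambda\boldsymbol u$ in the interior of $K$; $K$ is completely illuminated by a set of directions if every boundary point of $K$ is illuminated by at least one of them. *)

theory Defs
  imports "HOL-Analysis.Analysis"
begin

definition Hem :: "'a::euclidean_space \<Rightarrow> 'a set" where
  "Hem u = {x \<in> sphere 0 1. x \<bullet> u > 0}"

definition illuminates :: "'a::euclidean_space set \<Rightarrow> 'a \<Rightarrow> 'a \<Rightarrow> bool" where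
  "illuminates K u p \<longleftrightarrow> (\<exists>t>0. p + t *\<^sub>R u \<in> interior K)"

definition completely_illuminated :: "'a::euclidean_space set \<Rightarrow> 'a set \<Rightarrow> bool" where
  "completely_illuminated K U \<longleftrightarrow> (\<forall>p \<in> frontier K. \<exists>u \<in> U. illuminates K u p)"

definition cap_body_vertices :: "'a::euclidean_space set \<Rightarrow> bool" where
  "cap_body_vertices V \<longleftrightarrow> countable V \<and> (\<forall>v \<in> V. v \<notin> cball 0 1) \<and>
     (\<forall>v \<in> V. \<forall>w \<in> V. v \<noteq> w \<longrightarrow> closed_segment v w \<inter> cball 0 1 \<noteq> {})"

definition spherical_cap :: "'a::euclidean_space \<Rightarrow> 'a set" where
  "spherical_cap v = {x \<in> sphere 0 1. x \<bullet> v \<ge> 1}"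

end

theory Submission
  imports Defs
begin

lemma ortho_inner:
  fixes w e :: "'a::euclidean_space"
  assumes "w \<bullet> w = 1" "e \<bullet> e = 1" "w \<bullet> e = 0"
  shows "(x *\<^sub>R w + y *\<^sub>R e) \<bullet> (x' *\<^sub>R w + y' *\<^sub>R e) = x*x' + y*y'"
  using assms by (simp add: inner_add_left inner_add_right inner_commute algebra_simps)

lemma real_ineq:
  fixes a b r \<rho> :: real
  assumes "r > 1" "a^2 + b^2 = 1" "b \<ge> 0" "\<rho> = sqrt (1 - 1/r^2)" "a/r + \<rho>*b < 0"
  shows "r*b < 1"
proof -
  have r2: "r^2 > 1" using assms(1) by (simp add: one_less_power)
  have r3: "1/r^2 < 1" using r2 by (simp add: divide_less_eq)
  have rho0: "\<rho> \<ge> 0" using assms(4) r3 by simp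
  have rho2: "\<rho>^2 = 1 - 1/r^2" using assms(4) r3 by simp
  have "\<rho>*b < -a/r" using assms(5) by simp
  moreover have "0 \<le> \<rho>*b" using rho0 assms(3) by simp
  ultimately have "(\<rho>*b)^2 < (-a/r)^2" using power_strict_mono[of "\<rho>*b" "-a/r" 2] by linarith
  hence "(1 - 1/r^2) * b^2 < a^2 / r^2" using rho2 by (simp add: power_mult_distrib power_divide)
  hence "((1 - 1/r^2) * b^2) * r^2 < (a^2 / r^2) * r^2" using r2 by (intro mult_strict_right_mono) auto
  moreover have "((1 - 1/r^2) * b^2) * r^2 = r^2*b^2 - b^2" using r2 assms(1) by (simp add: algebra_simps)
  moreover have "(a^2 / r^2) * r^2 = a^2" using r2 assms(1) by simp
  ultimately have "r^2 * b^2 - b^2 < a^2" by linarith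
  hence "(r*b)^2 < 1" using assms(2) by (simp add: power_mult_distrib)
  thus ?thesis using assms(1,3)
    by (smt (verit, ccfv_SIG) one_le_power)
qed

lemma unit_orth:
  fixes w :: "'a::euclidean_space"
  assumes "DIM('a) \<ge> 2"
  obtains e where "e \<bullet> e = 1" "e \<bullet> w = 0"
proof -
  obtain y where y: "y \<noteq> 0" "orthogonal w y" using orthogonal_to_vector_exists assms by blast
  define e where "e = y /\<^sub>R norm y"
  have "e \<bullet> e = 1" using y(1) unfolding e_def by (simp add: power2_norm_eq_inner[symmetric] divide_simps)
  moreover have "e \<bullet> w = 0" using y(2) unfolding e_def orthogonal_def by (simp add: inner_commute)
  ultimately show ?thesis using that by blast
qed

lemma lemA:
  fixes v u :: "'a::euclidean_space"
  assumes dim: "DIM('a) \<ge> 2" and v: "norm v > 1" and u: "norm u = 1"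
    and H: "\<And>c. norm c = 1 \<Longrightarrow> c \<bullet> v = 1 \<Longrightarrow> c \<bullet> u < 0"
  shows "\<exists>l>0. norm (v + l *\<^sub>R u) < 1"
proof -
  define r where "r = norm v"
  have r: "r > 1" using v r_def by simp
  define w where "w = v /\<^sub>R r"
  have vw: "v = r *\<^sub>R w" using r unfolding w_def by simp
  have vne: "v \<noteq> 0" using v by auto
  have w1: "w \<bullet> w = 1" using r vne unfolding w_def r_def by (simp add: power2_norm_eq_inner[symmetric] divide_simps)
  define a where "a = u \<bullet> w"
  define e0 where "e0 = u - a *\<^sub>R w"
  have e0w: "e0 \<bullet> w = 0" unfolding e0_def a_def using w1 by (simp add: inner_diff_left)
  obtain e where e1: "e \<bullet> e = 1" and ew: "w \<bullet> e = 0" and ue: "u = a *\<^sub>R w + norm e0 *\<^sub>R e"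
  proof (cases "e0 = 0")
    case True
    obtain y where "y \<bullet> y = 1" "y \<bullet> w = 0" using unit_orth dim by blast
    moreover have "u = a *\<^sub>R w + norm e0 *\<^sub>R y" using True unfolding e0_def by simp
    ultimately show ?thesis using that by (simp add: inner_commute)
  next
    case False
    define y where "y = e0 /\<^sub>R norm e0"
    have "y \<bullet> y = 1" using False unfolding y_def by (simp add: power2_norm_eq_inner[symmetric] divide_simps)
    moreover have "w \<bullet> y = 0" using e0w unfolding y_def by (simp add: inner_commute)
    moreover have "u = a *\<^sub>R w + norm e0 *\<^sub>R y" using False unfolding y_def e0_def by simp
    ultimately show ?thesis using that by blast
  qed
  define b where "b = norm e0"
  have b0: "b \<ge> 0" unfolding b_def by simp
  have "1 = u \<bullet> u" using u by (simp add: power2_norm_eq_inner[symmetric])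
  also have "\<dots> = a*a + b*b" unfolding ue b_def by (rule ortho_inner[OF w1 e1 ew])
  finally have ab: "a^2 + b^2 = 1" by (simp add: power2_eq_square)
  define \<rho> where "\<rho> = sqrt (1 - 1/r^2)"
  have r2: "r^2 > 1" using r by (simp add: one_less_power)
  have r3: "1/r^2 < 1" using r2 by (simp add: divide_less_eq)
  have rho2: "\<rho>^2 = 1 - 1/r^2" using \<rho>_def r3 by simp
  define c where "c = (1/r) *\<^sub>R w + \<rho> *\<^sub>R e"
  have "c \<bullet> c = (1/r)*(1/r) + \<rho>*\<rho>" unfolding c_def by (rule ortho_inner[OF w1 e1 ew])
  also have "\<dots> = 1" using rho2 by (simp add: power2_eq_square)
  finally have "norm c = 1" by (simp add: norm_eq_sqrt_inner)
  moreover have "c \<bullet> v = 1"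
  proof -
    have "c \<bullet> v = c \<bullet> (r *\<^sub>R w + 0 *\<^sub>R e)" using vw by simp
    also have "\<dots> = (1/r)*r + \<rho>*0" unfolding c_def by (rule ortho_inner[OF w1 e1 ew])
    finally show ?thesis using r by simp
  qed
  ultimately have "c \<bullet> u < 0" using H by blast
  moreover have "c \<bullet> u = (1/r)*a + \<rho>*b" unfolding c_def ue b_def by (rule ortho_inner[OF w1 e1 ew])
  ultimately have neg: "a/r + \<rho>*b < 0" by simp
  have rho0: "\<rho> \<ge> 0" using \<rho>_def r3 by simp
  have a0: "a < 0"
  proof -
    have "\<rho>*b \<ge> 0" using rho0 b0 by simp
    hence "a/r < 0" using neg by linarith
    thus ?thesis using r by (simp add: divide_less_0_iff)
  qed
  have rb: "r*b < 1" using real_ineq[OF r ab b0 \<rho>_def neg] .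
  define l where "l = - r * a"
  have l0: "l > 0" unfolding l_def using a0 r by (simp add: mult_pos_neg)
  have "v + l *\<^sub>R u = (r + l*a) *\<^sub>R w + (l*b) *\<^sub>R e" unfolding vw ue b_def by (simp add: algebra_simps)
  hence "(v + l *\<^sub>R u) \<bullet> (v + l *\<^sub>R u) = (r + l*a)*(r + l*a) + (l*b)*(l*b)"
    using ortho_inner[OF w1 e1 ew] by simp
  also have "\<dots> = (r*b)^2 * (a^2 + b^2)"
  proof -
    have "r + l*a = r*(1 - a^2)" unfolding l_def by (simp add: algebra_simps power2_eq_square)
    also have "\<dots> = r*b^2" using ab by simp
    finally have "r + l*a = r*b^2" .
    hence e1: "(r + l*a)*(r + l*a) = (r*b^2)^2" by (simp add: power2_eq_square)
    have e2: "(l*b)*(l*b) = (r*a*b)^2" unfolding l_def by (simp add: power2_eq_square)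
    have "(r + l*a)*(r + l*a) + (l*b)*(l*b) = (r*b^2)^2 + (r*a*b)^2" using e1 e2 by simp
    thus ?thesis by (simp add: power2_eq_square algebra_simps)
  qed
  also have "\<dots> < 1" using ab rb b0 r
    by (simp add: power_less_one_iff abs_less_iff)
  finally have "norm (v + l *\<^sub>R u) < 1" by (simp add: norm_eq_sqrt_inner)
  thus ?thesis using l0 by blast
qed


abbreviation Cone :: "'a::euclidean_space \<Rightarrow> 'a set" where
  "Cone v \<equiv> convex hull (insert v (cball 0 1))"

lemma cap_seg:
  fixes V :: "'a::euclidean_space set"
  assumes "cap_body_vertices V" "v \<in> V" "w \<in> V" "v \<noteq> w"
  obtains q t where "q \<in> cball 0 1" "0 < t" "t < 1" "q = (1 - t) *\<^sub>R v + t *\<^sub>R w"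
proof -
  obtain q where q: "q \<in> closed_segment v w" "q \<in> cball 0 1" using assms unfolding cap_body_vertices_def by blast
  then obtain t where t: "0 \<le> t" "t \<le> 1" "q = (1 - t) *\<^sub>R v + t *\<^sub>R w" by (auto simp: in_segment)
  have "t \<noteq> 0" using t q assms unfolding cap_body_vertices_def by auto
  moreover have "t \<noteq> 1" using t q assms unfolding cap_body_vertices_def by auto
  ultimately show ?thesis using that t q by auto
qed

lemma seg_half:
  fixes V :: "'a::euclidean_space set"
  assumes "cap_body_vertices V" "v \<in> V" "w \<in> V" "v \<noteq> w" "norm c = 1" "c \<bullet> v \<ge> 1"
  shows "w \<bullet> c \<le> 1"
proof (rule ccontr)
  assume "\<not> w \<bullet> c \<le> 1"
  hence wc: "c \<bullet> w > 1" by (simp add: inner_commute)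
  obtain q t where q: "q \<in> cball 0 1" "0 < t" "t < 1" "q = (1 - t) *\<^sub>R v + t *\<^sub>R w"
    using cap_seg assms(1-4) by blast
  have "c \<bullet> q = (1 - t) * (c \<bullet> v) + t * (c \<bullet> w)" using q(4) by (simp add: inner_add_right)
  also have "\<dots> > (1 - t) * 1 + t * 1"
    using q(2,3) wc assms(6) by (intro add_le_less_mono mult_left_mono mult_strict_left_mono) auto
  finally have "c \<bullet> q > 1" by simp
  moreover have "c \<bullet> q \<le> norm c * norm q" by (rule norm_cauchy_schwarz)
  ultimately show False using q(1) assms(5) by simp
qed

lemma K_half:
  fixes V :: "'a::euclidean_space set"
  assumes "norm c = 1" "\<forall>w\<in>V. w \<bullet> c \<le> 1" "y \<in> convex hull (sphere 0 1 \<union> V)"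
  shows "y \<bullet> c \<le> 1"
proof -
  have "sphere 0 1 \<union> V \<subseteq> {x. c \<bullet> x \<le> 1}"
  proof
    fix x assume "x \<in> sphere 0 1 \<union> V"
    thus "x \<in> {x. c \<bullet> x \<le> 1}"
    proof
      assume "x \<in> sphere 0 1"
      have "c \<bullet> x \<le> norm c * norm x" by (rule norm_cauchy_schwarz)
      thus ?thesis using assms(1) \<open>x \<in> sphere 0 1\<close> by simp
    qed (use assms(2) in \<open>auto simp: inner_commute\<close>)
  qed
  hence "convex hull (sphere 0 1 \<union> V) \<subseteq> {x. c \<bullet> x \<le> 1}"
    by (intro hull_minimal convex_halfspace_le) auto
  thus ?thesis using assms(3) by (auto simp: inner_commute)
qed

lemma int_half:
  fixes K :: "'a::euclidean_space set"
  assumes "z \<in> interior K" "\<forall>y\<in>K. y \<bullet> c \<le> 1" "norm c = 1"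
  shows "z \<bullet> c < 1"
proof -
  obtain e where e: "e > 0" "ball z e \<subseteq> K" using assms(1) by (meson mem_interior)
  have "z + (e/2) *\<^sub>R c \<in> ball z e" using e assms(3) by (simp add: dist_norm)
  hence "(z + (e/2) *\<^sub>R c) \<bullet> c \<le> 1" using e assms(2) by blast
  moreover have "c \<bullet> c = 1" using assms(3) by (simp add: power2_norm_eq_inner[symmetric])
  ultimately have "z \<bullet> c + e/2 \<le> 1" by (simp add: inner_add_left)
  thus ?thesis using e by simp
qed

lemma cball_sub: "cball 0 1 \<subseteq> convex hull (sphere (0::'a::euclidean_space) 1 \<union> V)"
proof -
  have "cball (0::'a) 1 = convex hull (frontier (cball 0 1))"
    by (rule Krein_Milman_frontier) auto
  also have "\<dots> = convex hull (sphere 0 1)" by simp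
  also have "\<dots> \<subseteq> convex hull (sphere 0 1 \<union> V)" by (rule hull_mono) auto
  finally show ?thesis .
qed

lemma ball_int: "ball 0 1 \<subseteq> interior (convex hull (sphere (0::'a::euclidean_space) 1 \<union> V))"
  using cball_sub by (meson ball_subset_cball interior_maximal open_ball order_trans)

lemma cone_sub:
  assumes "v \<in> V"
  shows "Cone v \<subseteq> convex hull (sphere (0::'a::euclidean_space) 1 \<union> V)"
proof -
  have "insert v (cball 0 1) \<subseteq> convex hull (sphere (0::'a) 1 \<union> V)"
    using assms cball_sub[of V] hull_inc[of v "sphere 0 1 \<union> V"] by auto
  thus ?thesis by (intro hull_minimal) auto
qed

lemma triangle:
  fixes V :: "'a::euclidean_space set"
  assumes "cap_body_vertices V" "w \<in> V" "v \<in> V" "b \<in> cball 0 1" "x \<in> convex hull {w, v, b}"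
  shows "x \<in> Cone w \<union> Cone v"
proof (cases "w = v")
  case True
  have "convex hull {w, v, b} \<subseteq> Cone w"
    using True assms(4) by (intro hull_minimal) (auto intro: hull_inc)
  thus ?thesis using assms(5) by blast
next
  case False
  obtain q t where q: "q \<in> cball 0 1" "0 < t" "t < 1" "q = (1 - t) *\<^sub>R w + t *\<^sub>R v"
    using cap_seg assms(1-3) False by blast
  obtain \<alpha> \<beta> \<gamma> where abc: "0 \<le> \<alpha>" "0 \<le> \<beta>" "0 \<le> \<gamma>" "\<alpha> + \<beta> + \<gamma> = 1"
     "x = \<alpha> *\<^sub>R w + \<beta> *\<^sub>R v + \<gamma> *\<^sub>R b"
    using assms(5) unfolding convex_hull_3 by blast
  show ?thesis
  proof (cases "\<alpha> * t \<ge> \<beta> * (1 - t)")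
    case True
    have qq: "(\<beta>/t) *\<^sub>R q = (\<beta>*(1-t)/t) *\<^sub>R w + \<beta> *\<^sub>R v"
      using q(2) unfolding q(4) by (simp add: scaleR_add_right)
    have ww: "(\<alpha> - \<beta>*(1-t)/t) *\<^sub>R w + (\<beta>*(1-t)/t) *\<^sub>R w = \<alpha> *\<^sub>R w"
      by (simp add: scaleR_left_distrib[symmetric])
    have "x = (\<alpha> - \<beta>*(1-t)/t) *\<^sub>R w + (\<beta>/t) *\<^sub>R q + \<gamma> *\<^sub>R b"
      unfolding abc(5) qq using ww by (simp add: algebra_simps)
    moreover have "\<alpha> - \<beta>*(1-t)/t \<ge> 0" using True q(2) by (simp add: field_simps)
    moreover have "\<beta>/t \<ge> 0" using abc q by simp
    moreover have "(\<alpha> - \<beta>*(1-t)/t) + \<beta>/t + \<gamma> = \<alpha> + \<beta> + \<gamma>" using q(2) by (simp add: field_simps)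
    ultimately have "x \<in> convex hull {w, q, b}" unfolding convex_hull_3 using abc(3,4) by (smt (verit) mem_Collect_eq)
    moreover have "convex hull {w, q, b} \<subseteq> Cone w"
      using q(1) assms(4) by (intro hull_minimal) (auto intro: hull_inc)
    ultimately show ?thesis by blast
  next
    case False
    have qq: "(\<alpha>/(1-t)) *\<^sub>R q = \<alpha> *\<^sub>R w + (\<alpha>*t/(1-t)) *\<^sub>R v"
      using q(3) unfolding q(4) by (simp add: scaleR_add_right)
    have vv: "(\<beta> - \<alpha>*t/(1-t)) *\<^sub>R v + (\<alpha>*t/(1-t)) *\<^sub>R v = \<beta> *\<^sub>R v"
      by (simp add: scaleR_left_distrib[symmetric])
    have "x = (\<alpha>/(1-t)) *\<^sub>R q + (\<beta> - \<alpha>*t/(1-t)) *\<^sub>R v + \<gamma> *\<^sub>R b"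
      unfolding abc(5) qq using vv by (simp add: algebra_simps)
    moreover have "\<beta> - \<alpha>*t/(1-t) \<ge> 0" using False q(3) by (simp add: field_simps)
    moreover have "\<alpha>/(1-t) \<ge> 0" using abc q by simp
    moreover have "\<alpha>/(1-t) + (\<beta> - \<alpha>*t/(1-t)) + \<gamma> = \<alpha> + \<beta> + \<gamma>"
    proof -
      have "\<alpha>/(1-t) - \<alpha>*t/(1-t) = (\<alpha>*(1-t))/(1-t)" by (simp add: diff_divide_distrib[symmetric] algebra_simps)
      also have "\<dots> = \<alpha>" using q(3) by simp
      finally show ?thesis by linarith
    qed
    ultimately have "x \<in> convex hull {q, v, b}" unfolding convex_hull_3 using abc(3,4) by (smt (verit) mem_Collect_eq)
    moreover have "convex hull {q, v, b} \<subseteq> Cone v"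
      using q(1) assms(4) by (intro hull_minimal) (auto intro: hull_inc)
    ultimately show ?thesis by blast
  qed
qed


lemma struct_fin:
  fixes V :: "'a::euclidean_space set"
  assumes cb: "cap_body_vertices V" and "finite F" "F \<subseteq> V"
  shows "convex hull (cball 0 1 \<union> F) \<subseteq> cball 0 1 \<union> (\<Union>v\<in>F. Cone v)"
  using assms(2,3)
proof (induction F rule: finite_induct)
  case empty
  then show ?case using convex_hull_eq[of "cball (0::'a) 1"] convex_cball by simp
next
  case (insert w F)
  have wV: "w \<in> V" using insert by auto
  show ?case
  proof
    fix x assume "x \<in> convex hull (cball 0 1 \<union> insert w F)"
    hence "x \<in> convex hull (insert w (cball 0 1 \<union> F))" by simp
    then obtain a b y where ab: "0 \<le> a" "0 \<le> b" "a + b = 1" "y \<in> convex hull (cball 0 1 \<union> F)"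
        "x = a *\<^sub>R w + b *\<^sub>R y"
      by (subst (asm) convex_hull_insert) auto
    have xwy: "x \<in> convex hull {w, y}" unfolding convex_hull_2 using ab by blast
    from ab(4) insert.IH insert.prems have "y \<in> cball 0 1 \<or> (\<exists>v\<in>F. y \<in> Cone v)" by auto
    thus "x \<in> cball 0 1 \<union> (\<Union>v\<in>insert w F. Cone v)"
    proof
      assume "y \<in> cball 0 1"
      hence "convex hull {w, y} \<subseteq> Cone w" by (intro hull_minimal) (auto intro: hull_inc)
      thus ?thesis using xwy by auto
    next
      assume "\<exists>v\<in>F. y \<in> Cone v"
      then obtain v where v: "v \<in> F" "y \<in> Cone v" by blast
      have vV: "v \<in> V" using v insert by auto
      obtain a' b' z where z: "0 \<le> a'" "0 \<le> b'" "a' + b' = 1" "z \<in> convex hull (cball 0 1)"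
          "y = a' *\<^sub>R v + b' *\<^sub>R z"
        using v(2) by (subst (asm) convex_hull_insert) auto
      have zc: "z \<in> cball 0 1" using z(4) convex_hull_eq[of "cball (0::'a) 1"] convex_cball by simp
      have "y \<in> convex hull {v, z}" unfolding convex_hull_2 using z by blast
      also have "\<dots> \<subseteq> convex hull {w, v, z}" by (rule hull_mono) auto
      finally have "convex hull {w, y} \<subseteq> convex hull {w, v, z}"
        by (intro hull_minimal) (auto intro: hull_inc)
      hence "x \<in> convex hull {w, v, z}" using xwy by blast
      hence "x \<in> Cone w \<union> Cone v" using triangle[OF cb wV vV zc] by blast
      thus ?thesis using v(1) by auto
    qed
  qed
qed

lemma struct:
  fixes V :: "'a::euclidean_space set"
  assumes cb: "cap_body_vertices V" and x: "x \<in> convex hull (sphere 0 1 \<union> V)"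
  shows "x \<in> cball 0 1 \<or> (\<exists>v\<in>V. x \<in> Cone v)"
proof -
  obtain T where T: "finite T" "T \<subseteq> sphere 0 1 \<union> V" "x \<in> convex hull T"
    using x by (subst (asm) caratheodory) auto
  have "T \<subseteq> cball 0 1 \<union> (T \<inter> V)" using T(2) by auto
  hence "x \<in> convex hull (cball 0 1 \<union> (T \<inter> V))" using T(3) hull_mono by blast
  hence "x \<in> cball 0 1 \<union> (\<Union>v\<in>T \<inter> V. Cone v)" using struct_fin[OF cb, of "T \<inter> V"] T(1) by blast
  thus ?thesis by blast
qed

lemma far_pair:
  fixes V :: "'a::euclidean_space set"
  assumes cb: "cap_body_vertices V" and "v \<in> V" "w \<in> V" "v \<noteq> w" "norm v > 2" "norm w > 2"
  shows "(v /\<^sub>R norm v) \<bullet> (w /\<^sub>R norm w) < -1/2"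
proof (rule ccontr)
  define a where "a = v /\<^sub>R norm v"
  define b where "b = w /\<^sub>R norm w"
  define s where "s = 1 + a \<bullet> b"
  assume "\<not> ?thesis"
  hence s: "s \<ge> 1/2" unfolding s_def a_def b_def by simp
  obtain q t where q: "q \<in> cball 0 1" "0 < t" "t < 1" "q = (1 - t) *\<^sub>R v + t *\<^sub>R w"
    using cap_seg assms(1-4) by blast
  have "v \<noteq> 0" "w \<noteq> 0" using assms(5,6) by auto
  have aa: "a \<bullet> a = 1" using \<open>v \<noteq> 0\<close> unfolding a_def by (simp add: power2_norm_eq_inner[symmetric] divide_simps)
  have bb: "b \<bullet> b = 1" using \<open>w \<noteq> 0\<close> unfolding b_def by (simp add: power2_norm_eq_inner[symmetric] divide_simps)
  have va: "v = norm v *\<^sub>R a" using \<open>v \<noteq> 0\<close> unfolding a_def by simp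
  have wb: "w = norm w *\<^sub>R b" using \<open>w \<noteq> 0\<close> unfolding b_def by simp
  have "(a + b) \<bullet> v = norm v * s" unfolding s_def
    by (subst va) (simp add: inner_add_left aa inner_commute algebra_simps)
  moreover have "(a + b) \<bullet> w = norm w * s" unfolding s_def
    by (subst wb) (simp add: inner_add_left bb inner_commute algebra_simps)
  ultimately have abq: "(a + b) \<bullet> q = ((1 - t) * norm v + t * norm w) * s"
    unfolding q(4) by (simp add: inner_add_right algebra_simps)
  have "(1 - t) * norm v + t * norm w > (1 - t) * 2 + t * 2"
    using q(2,3) assms(5,6) by (intro add_less_le_mono mult_strict_left_mono mult_left_mono) auto
  hence "(1 - t) * norm v + t * norm w > 2" by simp
  hence gt: "(a + b) \<bullet> q > 2 * s" unfolding abq using s by (intro mult_strict_right_mono) auto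
  have "(a + b) \<bullet> q \<le> norm (a + b) * norm q" by (rule norm_cauchy_schwarz)
  also have "\<dots> \<le> norm (a + b)" using q(1) by (simp add: mult_left_le)
  finally have "2 * s < norm (a + b)" using gt by simp
  hence "(2 * s)^2 < (norm (a + b))^2" using s by (intro power_strict_mono) auto
  also have "(norm (a + b))^2 = 2 * s" unfolding power2_norm_eq_inner s_def
    by (simp add: inner_add_left inner_add_right aa bb inner_commute)
  finally have "4 * s * s < 2 * s" by (simp add: power2_eq_square)
  moreover have "(4 * s) * (1 / 2) \<le> (4 * s) * s" using s by (intro mult_left_mono) auto
  ultimately show False by simp
qed

lemma bounded_V:
  fixes V :: "'a::euclidean_space set"
  assumes cb: "cap_body_vertices V"
  shows "bounded V"
proof -
  define W where "W = {v\<in>V. norm v > 2}"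
  have "finite W"
  proof (rule ccontr)
    assume "infinite W"
    then obtain B where B: "finite B" "card B = 3" "B \<subseteq> W" using infinite_arbitrarily_large by blast
    then obtain x y z where xyz: "B = {x, y, z}" "x \<noteq> y" "y \<noteq> z" "x \<noteq> z" by (auto simp: card_3_iff)
    have inW: "x \<in> W" "y \<in> W" "z \<in> W" using B(3) xyz(1) by auto
    hence nz: "x \<noteq> 0" "y \<noteq> 0" "z \<noteq> 0" unfolding W_def by auto
    define a where "a = x /\<^sub>R norm x"
    define b where "b = y /\<^sub>R norm y"
    define c where "c = z /\<^sub>R norm z"
    have "a \<bullet> b < -1/2" unfolding a_def b_def using far_pair[OF cb] inW xyz unfolding W_def by blast
    moreover have "b \<bullet> c < -1/2" unfolding c_def b_def using far_pair[OF cb] inW xyz unfolding W_def by blast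
    moreover have "a \<bullet> c < -1/2" unfolding a_def c_def using far_pair[OF cb] inW xyz unfolding W_def by blast
    moreover have "a \<bullet> a = 1" using nz unfolding a_def by (simp add: power2_norm_eq_inner[symmetric] divide_simps)
    moreover have "b \<bullet> b = 1" using nz unfolding b_def by (simp add: power2_norm_eq_inner[symmetric] divide_simps)
    moreover have "c \<bullet> c = 1" using nz unfolding c_def by (simp add: power2_norm_eq_inner[symmetric] divide_simps)
    moreover have "(a + b + c) \<bullet> (a + b + c) \<ge> 0" by simp
    ultimately show False by (simp add: inner_add_left inner_add_right inner_commute)
  qed
  hence "bounded (cball 0 2 \<union> W)" by (simp add: finite_imp_bounded)
  moreover have "V \<subseteq> cball 0 2 \<union> W" unfolding W_def by auto
  ultimately show ?thesis using bounded_subset by blast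
qed

lemma closed_SV:
  fixes V :: "'a::euclidean_space set"
  assumes cb: "cap_body_vertices V"
  shows "closed (sphere 0 1 \<union> V)"
  unfolding closed_limpt
proof (intro allI impI)
  fix x assume "x islimpt (sphere 0 1 \<union> V)"
  hence "x islimpt sphere 0 1 \<or> x islimpt V" by (simp add: islimpt_Un)
  thus "x \<in> sphere 0 1 \<union> V"
  proof
    assume "x islimpt sphere 0 1"
    thus ?thesis using closed_sphere closed_limpt by blast
  next
    assume L: "x islimpt V"
    have Vn: "\<And>v. v \<in> V \<Longrightarrow> norm v > 1" using cb unfolding cap_body_vertices_def by auto
    consider "norm x < 1" | "norm x = 1" | "norm x > 1" by linarith
    thus ?thesis
    proof cases
      case 1
      hence "1 - norm x > 0" by simp
      then obtain v where v: "v \<in> V" "dist v x < 1 - norm x" using L unfolding islimpt_approachable by blast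
      have "norm v \<le> norm x + dist v x" by (metis dist_norm norm_triangle_sub add.commute)
      thus ?thesis using v Vn[of v] by simp
    next
      case 2 thus ?thesis by simp
    next
      case 3
      define e where "e = norm x - 1"
      have e: "e > 0" using 3 e_def by simp
      obtain v1 where v1: "v1 \<in> V" "v1 \<noteq> x" "dist v1 x < e" using L e unfolding islimpt_approachable by blast
      have "dist v1 x > 0" using v1 by simp
      then obtain v2 where v2: "v2 \<in> V" "v2 \<noteq> x" "dist v2 x < dist v1 x" using L unfolding islimpt_approachable by blast
      have ne: "v1 \<noteq> v2" using v2 by auto
      obtain q t where q: "q \<in> cball 0 1" "0 < t" "t < 1" "q = (1 - t) *\<^sub>R v1 + t *\<^sub>R v2"
        using cap_seg[OF cb v1(1) v2(1) ne] by blast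
      have "v1 \<in> ball x e" "v2 \<in> ball x e" using v1 v2 by (auto simp: dist_commute)
      hence "q \<in> ball x e" unfolding q(4) using q(2,3) by (intro convexD[OF convex_ball]) auto
      hence "dist x q < e" by simp
      moreover have "norm x \<le> norm q + dist x q" by (metis dist_norm norm_triangle_sub add.commute)
      ultimately show ?thesis using q(1) e_def by simp
    qed
  qed
qed

lemma closed_K:
  fixes V :: "'a::euclidean_space set"
  assumes cb: "cap_body_vertices V"
  shows "closed (convex hull (sphere 0 1 \<union> V))"
proof -
  have "compact (sphere 0 1 \<union> V)"
    using closed_SV[OF cb] bounded_V[OF cb] by (simp add: compact_eq_bounded_closed)
  thus ?thesis by (intro compact_imp_closed compact_convex_hull)
qed


lemma cap_exists:
  fixes v :: "'a::euclidean_space"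
  assumes dim: "DIM('a) \<ge> 2" and v: "norm v > 1"
  obtains c where "norm c = 1" "c \<bullet> v = 1"
proof -
  define r where "r = norm v"
  have r: "r > 1" using v r_def by simp
  define w where "w = v /\<^sub>R r"
  have vw: "v = r *\<^sub>R w" using r unfolding w_def by simp
  have vne: "v \<noteq> 0" using v by auto
  have w1: "w \<bullet> w = 1" using r vne unfolding w_def r_def by (simp add: power2_norm_eq_inner[symmetric] divide_simps)
  obtain e where e1: "e \<bullet> e = 1" and ew': "e \<bullet> w = 0" using unit_orth dim by blast
  have ew: "w \<bullet> e = 0" using ew' by (simp add: inner_commute)
  define \<rho> where "\<rho> = sqrt (1 - 1/r^2)"
  have r2: "r^2 > 1" using r by (simp add: one_less_power)
  have r3: "1/r^2 < 1" using r2 by (simp add: divide_less_eq)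
  have rho2: "\<rho>^2 = 1 - 1/r^2" using \<rho>_def r3 by simp
  define c where "c = (1/r) *\<^sub>R w + \<rho> *\<^sub>R e"
  have "c \<bullet> c = (1/r)*(1/r) + \<rho>*\<rho>" unfolding c_def by (rule ortho_inner[OF w1 e1 ew])
  also have "\<dots> = 1" using rho2 by (simp add: power2_eq_square)
  finally have "norm c = 1" by (simp add: norm_eq_sqrt_inner)
  moreover have "c \<bullet> v = 1"
  proof -
    have "c \<bullet> v = c \<bullet> (r *\<^sub>R w + 0 *\<^sub>R e)" using vw by simp
    also have "\<dots> = (1/r)*r + \<rho>*0" unfolding c_def by (rule ortho_inner[OF w1 e1 ew])
    finally show ?thesis using r by simp
  qed
  ultimately show ?thesis using that by blast
qed

lemma key:
  fixes v u :: "'a::euclidean_space"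
  assumes dim: "DIM('a) \<ge> 2" and v: "norm v > 1" and u: "norm u = 1"
    and H: "\<And>c. norm c = 1 \<Longrightarrow> c \<bullet> v = 1 \<Longrightarrow> c \<bullet> u < 0"
  shows "spherical_cap v \<subseteq> Hem (- u)"
proof
  fix c assume "c \<in> spherical_cap v"
  hence c: "norm c = 1" "c \<bullet> v \<ge> 1" unfolding spherical_cap_def by auto
  obtain l where l: "l > 0" "norm (v + l *\<^sub>R u) < 1" using lemA[OF dim v u H] by blast
  have "c \<bullet> (v + l *\<^sub>R u) \<le> norm c * norm (v + l *\<^sub>R u)" by (rule norm_cauchy_schwarz)
  hence "c \<bullet> v + l * (c \<bullet> u) < 1" using c(1) l(2) by (simp add: inner_add_right)
  hence "l * (c \<bullet> u) < 0" using c(2) by linarith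
  hence "c \<bullet> u < 0" using l(1) by (simp add: mult_less_0_iff)
  thus "c \<in> Hem (- u)" unfolding Hem_def using c(1) by simp
qed

theorem theorem1:
  fixes V :: "'a::euclidean_space set" and u :: "nat \<Rightarrow> 'a" and k :: nat
  assumes "DIM('a) \<ge> 2"
    and "cap_body_vertices V"
    and "\<And>j. j \<in> {1..k} \<Longrightarrow> u j \<in> sphere 0 1"
  shows "completely_illuminated (convex hull (sphere 0 1 \<union> V)) (u ` {1..k}) \<longleftrightarrow>
     ((\<forall>v \<in> V. \<exists>j \<in> {1..k}. spherical_cap v \<subseteq> Hem (- u j)) \<and>
      (\<Union>j \<in> {1..k}. Hem (- u j)) = sphere 0 1)"
proof -
  note dim = assms(1) and cb = assms(2)
  define K where "K = convex hull (sphere (0::'a) 1 \<union> V)"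
  have un: "\<And>j. j \<in> {1..k} \<Longrightarrow> norm (u j) = 1" using assms(3) by simp
  have Vn: "\<And>v. v \<in> V \<Longrightarrow> norm v > 1" using cb unfolding cap_body_vertices_def by auto
  have halfc: "\<And>v c y. v \<in> V \<Longrightarrow> norm c = 1 \<Longrightarrow> c \<bullet> v = 1 \<Longrightarrow> y \<in> K \<Longrightarrow> y \<bullet> c \<le> 1"
  proof -
    fix v c y assume a: "v \<in> V" "norm c = 1" "c \<bullet> v = 1" "y \<in> K"
    have "\<forall>w\<in>V. w \<bullet> c \<le> 1"
    proof
      fix w assume "w \<in> V"
      show "w \<bullet> c \<le> 1"
      proof (cases "w = v")
        case True thus ?thesis using a by (simp add: inner_commute)
      next
        case False thus ?thesis using seg_half[OF cb a(1) \<open>w \<in> V\<close> _ a(2)] a(3) by simp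
      qed
    qed
    thus "y \<bullet> c \<le> 1" using K_half[OF a(2)] a(4) unfolding K_def by blast
  qed
  have Hsub: "\<And>x. x \<in> Hem x' \<Longrightarrow> x \<in> sphere 0 1" for x' :: 'a unfolding Hem_def by auto
  show ?thesis unfolding K_def[symmetric]
  proof
    assume CI: "completely_illuminated K (u ` {1..k})"
    have i: "\<forall>v \<in> V. \<exists>j \<in> {1..k}. spherical_cap v \<subseteq> Hem (- u j)"
    proof
      fix v assume vV: "v \<in> V"
      obtain c0 where c0: "norm c0 = 1" "c0 \<bullet> v = 1" using cap_exists[OF dim Vn[OF vV]] by blast
      have "v \<in> K" unfolding K_def using vV by (simp add: hull_inc)
      moreover have "v \<notin> interior K"
      proof
        assume "v \<in> interior K"
        hence "v \<bullet> c0 < 1" using int_half halfc[OF vV c0] c0(1) by blast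
        thus False using c0(2) by (simp add: inner_commute)
      qed
      ultimately have "v \<in> frontier K" unfolding frontier_def using closure_subset by blast
      then obtain j t where j: "j \<in> {1..k}" "t > 0" "v + t *\<^sub>R u j \<in> interior K"
        using CI unfolding completely_illuminated_def illuminates_def by blast
      have "\<And>c. norm c = 1 \<Longrightarrow> c \<bullet> v = 1 \<Longrightarrow> c \<bullet> u j < 0"
      proof -
        fix c assume c: "norm c = 1" "c \<bullet> v = 1"
        have "(v + t *\<^sub>R u j) \<bullet> c < 1" using int_half[OF j(3) _ c(1)] halfc[OF vV c] by blast
        hence "t * (c \<bullet> u j) < 0" using c(2) by (simp add: inner_add_left inner_add_right inner_commute)
        thus "c \<bullet> u j < 0" using j(2) by (simp add: mult_less_0_iff)
      qed
      hence "spherical_cap v \<subseteq> Hem (- u j)" using key[OF dim Vn[OF vV] un[OF j(1)]] by blast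
      thus "\<exists>j \<in> {1..k}. spherical_cap v \<subseteq> Hem (- u j)" using j(1) by blast
    qed
    moreover have "(\<Union>j \<in> {1..k}. Hem (- u j)) = sphere 0 1"
    proof
      show "(\<Union>j \<in> {1..k}. Hem (- u j)) \<subseteq> sphere 0 1" unfolding Hem_def by auto
    next
      show "sphere 0 1 \<subseteq> (\<Union>j \<in> {1..k}. Hem (- u j))"
      proof
        fix x :: 'a assume xs: "x \<in> sphere 0 1"
        show "x \<in> (\<Union>j \<in> {1..k}. Hem (- u j))"
        proof (cases "\<exists>v\<in>V. x \<bullet> v \<ge> 1")
          case True
          then obtain v where "v \<in> V" "x \<bullet> v \<ge> 1" by blast
          hence "x \<in> spherical_cap v" using xs unfolding spherical_cap_def by auto
          thus ?thesis using i \<open>v \<in> V\<close> by blast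
        next
          case False
          hence "\<forall>w\<in>V. w \<bullet> x \<le> 1" by (auto simp: inner_commute)
          have x1: "norm x = 1" using xs by simp
          have hx: "\<forall>y\<in>K. y \<bullet> x \<le> 1" using K_half[OF x1 \<open>\<forall>w\<in>V. w \<bullet> x \<le> 1\<close>] unfolding K_def by blast
          have xx: "x \<bullet> x = 1" using x1 by (simp add: power2_norm_eq_inner[symmetric])
          have "x \<in> K" unfolding K_def using xs by (simp add: hull_inc)
          moreover have "x \<notin> interior K"
          proof
            assume "x \<in> interior K"
            hence "x \<bullet> x < 1" using int_half hx x1 by blast
            thus False using xx by simp
          qed
          ultimately have "x \<in> frontier K" unfolding frontier_def using closure_subset by blast
          then obtain j t where j: "j \<in> {1..k}" "t > 0" "x + t *\<^sub>R u j \<in> interior K"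
            using CI unfolding completely_illuminated_def illuminates_def by blast
          have "(x + t *\<^sub>R u j) \<bullet> x < 1" using int_half[OF j(3) hx x1] .
          hence "t * (u j \<bullet> x) < 0" using xx by (simp add: inner_add_left)
          hence "u j \<bullet> x < 0" using j(2) by (simp add: mult_less_0_iff)
          hence "x \<in> Hem (- u j)" unfolding Hem_def using xs by (simp add: inner_commute)
          thus ?thesis using j(1) by blast
        qed
      qed
    qed
    ultimately show "(\<forall>v \<in> V. \<exists>j \<in> {1..k}. spherical_cap v \<subseteq> Hem (- u j)) \<and>
      (\<Union>j \<in> {1..k}. Hem (- u j)) = sphere 0 1" by blast
  next
    assume R: "(\<forall>v \<in> V. \<exists>j \<in> {1..k}. spherical_cap v \<subseteq> Hem (- u j)) \<and>
      (\<Union>j \<in> {1..k}. Hem (- u j)) = sphere 0 1"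
    show "completely_illuminated K (u ` {1..k})"
      unfolding completely_illuminated_def
    proof
      fix p assume pf: "p \<in> frontier K"
      have pK: "p \<in> K" using pf closed_K[OF cb] frontier_subset_closed unfolding K_def by blast
      have pni: "p \<notin> interior K" using pf unfolding frontier_def by blast
      show "\<exists>uu\<in>u ` {1..k}. illuminates K uu p"
      proof (cases "norm p \<le> 1")
        case True
        have "norm p = 1"
        proof (rule ccontr)
          assume "norm p \<noteq> 1"
          hence "p \<in> ball 0 1" using True by simp
          thus False using ball_int[of V] pni unfolding K_def by blast
        qed
        hence "p \<in> sphere 0 1" by simp
        then obtain j where j: "j \<in> {1..k}" "p \<in> Hem (- u j)" using R by blast
        define t where "t = - (p \<bullet> u j)"
        have t: "t > 0" using j(2) unfolding Hem_def t_def by simp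
        have pp: "p \<bullet> p = 1" using \<open>norm p = 1\<close> by (simp add: power2_norm_eq_inner[symmetric])
        have uu: "u j \<bullet> u j = 1" using un[OF j(1)] by (simp add: power2_norm_eq_inner[symmetric])
        have "(p + t *\<^sub>R u j) \<bullet> (p + t *\<^sub>R u j) = p \<bullet> p + 2 * t * (p \<bullet> u j) + t * t * (u j \<bullet> u j)"
          by (simp add: inner_add_left inner_add_right inner_commute algebra_simps)
        also have "\<dots> = 1 - t * t" using pp uu unfolding t_def by (simp add: algebra_simps)
        also have "\<dots> < 1" using t by simp
        finally have "norm (p + t *\<^sub>R u j) < 1" by (simp add: norm_eq_sqrt_inner)
        hence "p + t *\<^sub>R u j \<in> interior K" using ball_int[of V] unfolding K_def by auto
        thus ?thesis using j(1) t unfolding illuminates_def by blast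
      next
        case False
        then obtain v where vV: "v \<in> V" and pC: "p \<in> Cone v"
          using struct[OF cb] pK unfolding K_def by auto
        obtain a s y where asy: "0 \<le> a" "0 \<le> s" "a + s = 1" "y \<in> convex hull (cball 0 1)"
            "p = a *\<^sub>R v + s *\<^sub>R y"
          using pC by (subst (asm) convex_hull_insert) auto
        have yc: "norm y \<le> 1" using asy(4) convex_hull_eq[of "cball (0::'a) 1"] convex_cball by simp
        have s1: "s < 1"
        proof (rule ccontr)
          assume "\<not> s < 1"
          hence "s = 1" "a = 0" using asy by auto
          hence "p = y" using asy(5) by simp
          thus False using False yc by simp
        qed
        obtain j where j: "j \<in> {1..k}" "spherical_cap v \<subseteq> Hem (- u j)" using R vV by blast
        have "\<And>c. norm c = 1 \<Longrightarrow> c \<bullet> v = 1 \<Longrightarrow> c \<bullet> u j < 0"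
        proof -
          fix c :: 'a assume "norm c = 1" "c \<bullet> v = 1"
          hence "c \<in> spherical_cap v" unfolding spherical_cap_def by simp
          hence "c \<in> Hem (- u j)" using j(2) by blast
          thus "c \<bullet> u j < 0" unfolding Hem_def by simp
        qed
        then obtain l where l: "l > 0" "norm (v + l *\<^sub>R u j) < 1" using lemA[OF dim Vn[OF vV] un[OF j(1)]] by blast
        define \<alpha> where "\<alpha> = (1 - s) / 2"
        define \<sigma> where "\<sigma> = s + \<alpha>"
        define t where "t = \<alpha> * l"
        have al: "\<alpha> > 0" using s1 unfolding \<alpha>_def by simp
        have t: "t > 0" using al l unfolding t_def by simp
        have sig: "\<sigma> > 0" "\<sigma> \<le> 1" using al asy(2) s1 unfolding \<sigma>_def \<alpha>_def by (auto simp: field_simps)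
        have eq: "p + t *\<^sub>R u j - (1 - \<sigma>) *\<^sub>R v = s *\<^sub>R y + \<alpha> *\<^sub>R (v + l *\<^sub>R u j)"
          unfolding asy(5) t_def \<sigma>_def using asy(3) scaleR_left_distrib[of a s v, symmetric] by (simp add: algebra_simps)
        have "norm (s *\<^sub>R y + \<alpha> *\<^sub>R (v + l *\<^sub>R u j)) \<le> s * norm y + \<alpha> * norm (v + l *\<^sub>R u j)"
          using asy(2) al by (metis abs_of_nonneg less_imp_le norm_scaleR norm_triangle_ineq)
        also have "\<dots> < s * 1 + \<alpha> * 1"
          using yc l(2) al asy(2) by (intro add_le_less_mono mult_left_mono mult_strict_left_mono) auto
        finally have "dist ((1 - \<sigma>) *\<^sub>R v) (p + t *\<^sub>R u j) < \<sigma>"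
          using eq unfolding \<sigma>_def by (simp add: dist_norm norm_minus_commute)
        hence inb: "p + t *\<^sub>R u j \<in> ball ((1 - \<sigma>) *\<^sub>R v) \<sigma>" by simp
        have "ball ((1 - \<sigma>) *\<^sub>R v) \<sigma> \<subseteq> Cone v"
        proof
          fix z assume "z \<in> ball ((1 - \<sigma>) *\<^sub>R v) \<sigma>"
          hence zd: "norm (z - (1 - \<sigma>) *\<^sub>R v) < \<sigma>" by (simp add: dist_norm norm_minus_commute)
          define y' where "y' = (z - (1 - \<sigma>) *\<^sub>R v) /\<^sub>R \<sigma>"
          have "norm y' \<le> 1" unfolding y'_def using zd sig by (simp add: divide_simps)
          hence y'C: "y' \<in> Cone v" by (intro hull_inc) simp
          have vC: "v \<in> Cone v" by (intro hull_inc) simp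
          have "z = (1 - \<sigma>) *\<^sub>R v + \<sigma> *\<^sub>R y'" unfolding y'_def using sig by simp
          thus "z \<in> Cone v" using convexD[OF convex_convex_hull vC y'C, of "1 - \<sigma>" \<sigma>] sig by simp
        qed
        also have "\<dots> \<subseteq> K" using cone_sub[OF vV] unfolding K_def .
        finally have "p + t *\<^sub>R u j \<in> interior K" using inb interior_maximal open_ball by blast
        thus ?thesis using j(1) t unfolding illuminates_def by blast
      qed
    qed
  qed
qed

end
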